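(* In the ACS setup of the context, with $M_k=\dfrac{|P_k\cap\mathcal{H}_0|}{1+|N^-_k|}$, one has $$\mathbb{E}\big[M_k\,\big|\,|P_k\cap\mathcal{H}_0|+|N^-_k|\big]\le\frac{m}{n-k+1},\qquad\text{hence}\qquad \mathbb{E}[M_k]\le\frac{m}{n-k+1}.$$
   Context: Setup. Let $n,m\ge 1$, $0\le k\le n$. For $i\in[n+m]$ let $X_i\in\mathcal{X}$, $Y_i\in\mathbb{R}$, $\mathcal{C}_i\subseteq\mathbb{R}$, with $\{(X_i,Y_i,\mathcal{C}_i)\}_{i}$ jointly exchangeable. $(A_1,\dots,A_{n+m})$ is uniform over binary vectors with exactly $n$ zeros and $m$ ones, independent of the data ($A_i=0$: labeled, $A_i=1$: test). $\mathcal{H}_0=\{i:A_i=1,Y_i\in\mathcal{C}_i\}$. $(\pi(1),\dots,\pi(k))$ is a uniformly random ordered choice of $k$ distinct indices from $\{i:A_i=0\}$, independent of all else; $U_k=[n+m]\setminus\{\pi(1),\dots,\pi(k)\}$, $N^-_k=\{i\in U_k:A_i=0,Y_i\in\mathcal{C}_i\}$, $P_k=\{i\in U_k:A_i=1\}$. *)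

theory Defs
  imports "HOL-Probability.Probability"
begin

text \<open>Indices are 0..<n+m instead of 1..n+m. A data point is a triple (X_i, Y_i, C_i).
 The vector A is represented by the set T of test indices (A_i = 1 iff i in T);
 the ordered choice pi(1),...,pi(k) is represented by a distinct list of length k.\<close>

type_synonym 'x datum = "'x \<times> real \<times> real set"

definition covered :: "'x datum \<Rightarrow> bool" where
  "covered z \<longleftrightarrow> fst (snd z) \<in> snd (snd z)"

definition ACS_law :: "nat \<Rightarrow> nat \<Rightarrow> nat \<Rightarrow> (nat set \<times> nat list) pmf" where
  "ACS_law n m k = do {
     T \<leftarrow> pmf_of_set {T. T \<subseteq> {..<n+m} \<and> card T = m};
     p \<leftarrow> pmf_of_set {xs. distinct xs \<and> length xs = k \<and> set xs \<subseteq> {..<n+m} - T};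
     return_pmf (T, p) }"

definition H0 :: "nat \<Rightarrow> nat \<Rightarrow> (nat \<Rightarrow> 'x datum) \<Rightarrow> nat set \<Rightarrow> nat set" where
  "H0 n m d T = {i. i < n+m \<and> i \<in> T \<and> covered (d i)}"

definition Uk :: "nat \<Rightarrow> nat \<Rightarrow> nat list \<Rightarrow> nat set" where
  "Uk n m p = {..<n+m} - set p"

definition Nminus :: "nat \<Rightarrow> nat \<Rightarrow> (nat \<Rightarrow> 'x datum) \<Rightarrow> nat set \<Rightarrow> nat list \<Rightarrow> nat set" where
  "Nminus n m d T p = {i \<in> Uk n m p. i \<notin> T \<and> covered (d i)}"

definition Pk :: "nat \<Rightarrow> nat \<Rightarrow> nat set \<Rightarrow> nat list \<Rightarrow> nat set" where
  "Pk n m T p = {i \<in> Uk n m p. i \<in> T}"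

definition Mk :: "nat \<Rightarrow> nat \<Rightarrow> (nat \<Rightarrow> 'x datum) \<Rightarrow> nat set \<Rightarrow> nat list \<Rightarrow> real" where
  "Mk n m d T p = real (card (Pk n m T p \<inter> H0 n m d T)) / (1 + real (card (Nminus n m d T p)))"

definition Tsum :: "nat \<Rightarrow> nat \<Rightarrow> (nat \<Rightarrow> 'x datum) \<Rightarrow> nat set \<Rightarrow> nat list \<Rightarrow> nat" where
  "Tsum n m d T p = card (Pk n m T p \<inter> H0 n m d T) + card (Nminus n m d T p)"

definition exchangeable :: "'w measure \<Rightarrow> 'd measure \<Rightarrow> nat \<Rightarrow> ('w \<Rightarrow> nat \<Rightarrow> 'd) \<Rightarrow> bool" where
  "exchangeable M S N D \<longleftrightarrow>
     (\<forall>\<sigma>. bij_betw \<sigma> {..<N} {..<N} \<longrightarrow>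
        distr M (PiM {..<N} (\<lambda>_. S)) (\<lambda>w. restrict (\<lambda>i. D w (\<sigma> i)) {..<N})
      = distr M (PiM {..<N} (\<lambda>_. S)) (\<lambda>w. restrict (D w) {..<N}))"

end

theory Submission imports Defs "HOL-Probability.Probability" begin

lemma core:
  fixes U C :: "nat set" and m :: nat
  assumes fin: "finite U" and CU: "C \<subseteq> U" and m1: "m \<ge> 1"
  shows "(\<Sum>T\<in>{T. T \<subseteq> U \<and> card T = m}. real (card (T\<inter>C)) / (1 + real (card (C - T))))
         \<le> real (card U choose (m-1))"
proof -
  define A where "A = {T. T \<subseteq> U \<and> card T = m}"
  define A' where "A' = {T. T \<subseteq> U \<and> card T = m - 1}"
  have finA: "finite A" unfolding A_def using fin by auto
  have finA': "finite A'" unfolding A'_def using fin by auto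
  have finC: "finite C" using fin CU finite_subset by blast
  have "(\<Sum>T\<in>A. real (card (T\<inter>C)) / (1 + real (card (C - T))))
      = (\<Sum>T\<in>A. \<Sum>i\<in>T\<inter>C. 1 / (1 + real (card (C - T))))"
    by (simp add: divide_inverse)
  also have "\<dots> = (\<Sum>(T,i)\<in>Sigma A (\<lambda>T. T\<inter>C). 1 / (1 + real (card (C - T))))"
    by (rule sum.Sigma) (use finA finC in auto)
  also have "\<dots> = (\<Sum>(T,i)\<in>Sigma A' (\<lambda>T. C - T). 1 / real (card (C - T)))"
  proof (rule sum.reindex_bij_witness[where i="\<lambda>(T,i). (insert i T, i)" and j="\<lambda>(T,i). (T - {i}, i)"])
    fix a assume "a \<in> Sigma A (\<lambda>T. T\<inter>C)"
    then obtain T i where a: "a = (T,i)" "T \<subseteq> U" "card T = m" "i \<in> T" "i \<in> C"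
      unfolding A_def by auto
    have "finite T" using a fin finite_subset by blast
    then show "(\<lambda>(T,i). (insert i T, i)) ((\<lambda>(T,i). (T - {i}, i)) a) = a" using a by auto
    show "(\<lambda>(T,i). (T - {i}, i)) a \<in> Sigma A' (\<lambda>T. C - T)"
      using a \<open>finite T\<close> unfolding A'_def by auto
    have "C - (T - {i}) = insert i (C - T)" using a by auto
    moreover have "finite (C - T)" using finC by auto
    ultimately have "card (C - (T - {i})) = 1 + card (C - T)" using a by simp
    then show "(case (\<lambda>(T,i). (T - {i}, i)) a of (T,i) \<Rightarrow> 1 / real (card (C - T)))
             = (case a of (T,i) \<Rightarrow> 1 / (1 + real (card (C - T))))" using a by simp
  next
    fix b assume "b \<in> Sigma A' (\<lambda>T. C - T)"
    then obtain T i where b: "b = (T,i)" "T \<subseteq> U" "card T = m - 1" "i \<notin> T" "i \<in> C"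
      unfolding A'_def by auto
    have "finite T" using b fin finite_subset by blast
    then show "(\<lambda>(T,i). (T - {i}, i)) ((\<lambda>(T,i). (insert i T, i)) b) = b" using b by auto
    show "(\<lambda>(T,i). (insert i T, i)) b \<in> Sigma A (\<lambda>T. T\<inter>C)"
      using b \<open>finite T\<close> CU m1 unfolding A_def by auto
  qed
  also have "\<dots> = (\<Sum>T\<in>A'. \<Sum>i\<in>C - T. 1 / real (card (C - T)))"
    by (rule sum.Sigma[symmetric]) (use finA' finC in auto)
  also have "\<dots> \<le> (\<Sum>T\<in>A'. 1)"
  proof (rule sum_mono)
    fix T assume "T \<in> A'"
    show "(\<Sum>i\<in>C - T. 1 / real (card (C - T))) \<le> 1"
      by (cases "card (C - T) = 0") auto
  qed
  also have "\<dots> = real (card U choose (m-1))"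
    unfolding A'_def using n_subsets[OF fin] by simp
  finally show ?thesis unfolding A_def .
qed

lemma choose_id:
  assumes "1 \<le> m" "m \<le> u"
  shows "real (u choose (m-1)) = real m / (real u - real m + 1) * real (u choose m)"
proof -
  obtain j where j: "m = Suc j" using assms(1) by (cases m) auto
  have e: "(u choose Suc j) * Suc j = (u choose j) * (u - j)"
    using binomial_absorption[of j u] binomial_absorb_comp[of u j] by (simp add: mult.commute)
  have "real (u choose Suc j) * real (Suc j) = real (u choose j) * (real u - real j)"
    using e assms j by (metis of_nat_diff of_nat_mult Suc_leD Suc_le_lessD less_imp_le_nat)
  moreover have "real u - real j > 0" using assms j by simp
  ultimately show ?thesis using j by (simp add: field_simps)
qed

definition AA :: "nat \<Rightarrow> nat \<Rightarrow> nat set set" where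
  "AA n m = {T. T \<subseteq> {..<n+m} \<and> card T = m}"
definition BB :: "nat \<Rightarrow> nat \<Rightarrow> nat \<Rightarrow> nat set \<Rightarrow> nat list set" where
  "BB n m k T = {xs. distinct xs \<and> length xs = k \<and> set xs \<subseteq> {..<n+m} - T}"

lemma finite_BB: "finite (BB n m k T)"
proof -
  have "BB n m k T \<subseteq> {xs. set xs \<subseteq> {..<n+m} \<and> length xs = k}" unfolding BB_def by auto
  moreover have "finite {xs. set xs \<subseteq> {..<n+m} \<and> length xs = k}"
    by (rule finite_lists_length_eq) simp
  ultimately show ?thesis using finite_subset by blast
qed

lemma card_BB:
  assumes "T \<in> AA n m" "k \<le> n"
  shows "card (BB n m k T) = \<Prod>{n - k + 1 .. n}"
proof -
  have c: "card ({..<n+m} - T) = n" using assms unfolding AA_def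
    by (subst card_Diff_subset) (auto intro: finite_subset)
  have "BB n m k T = {xs. length xs = k \<and> distinct xs \<and> set xs \<subseteq> {..<n+m} - T}"
    unfolding BB_def by auto
  then show ?thesis using card_lists_distinct_length_eq[of "{..<n+m} - T" k] c assms by simp
qed

lemma BB_ne:
  assumes "T \<in> AA n m" "k \<le> n"
  shows "BB n m k T \<noteq> {}"
proof -
  have "card (BB n m k T) > 0" using card_BB[OF assms] by (simp add: prod_pos)
  then show ?thesis by auto
qed

lemma AA_ne: "AA n m \<noteq> {}" and finite_AA: "finite (AA n m)"
proof -
  have "{n..<n+m} \<in> AA n m" unfolding AA_def by auto
  then show "AA n m \<noteq> {}" by auto
  show "finite (AA n m)" unfolding AA_def by auto
qed

lemma Sigma_ne:
  assumes "k \<le> n"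
  shows "Sigma (AA n m) (BB n m k) \<noteq> {}"
proof -
  obtain T where T: "T \<in> AA n m" using AA_ne by blast
  then obtain p where "p \<in> BB n m k T" using BB_ne[OF T assms] by blast
  then show ?thesis using T by auto
qed

lemma ACS_law_eq:
  assumes "k \<le> n"
  shows "ACS_law n m k = pmf_of_set (Sigma (AA n m) (BB n m k))"
proof (rule pmf_eqI)
  fix x :: "nat set \<times> nat list"
  obtain T0 p0 where x: "x = (T0, p0)" by (cases x)
  define K where "K = \<Prod>{n - k + 1 .. n}"
  have K: "\<And>T. T \<in> AA n m \<Longrightarrow> card (BB n m k T) = K" using card_BB assms K_def by blast
  have Kpos: "K > 0" unfolding K_def by (simp add: prod_pos)
  have fS: "finite (Sigma (AA n m) (BB n m k))" using finite_AA finite_BB by auto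
  have neS: "Sigma (AA n m) (BB n m k) \<noteq> {}"
  proof -
    obtain T where T: "T \<in> AA n m" using AA_ne by blast
    then obtain p where "p \<in> BB n m k T" using BB_ne[OF T assms] by blast
    then show ?thesis using T by auto
  qed
  have cS: "card (Sigma (AA n m) (BB n m k)) = card (AA n m) * K"
    using card_SigmaI[of "AA n m" "BB n m k"] finite_AA finite_BB K by simp
  have inner: "pmf (pmf_of_set (BB n m k T) \<bind> (\<lambda>p. return_pmf (T, p))) x
     = (if T = T0 \<and> p0 \<in> BB n m k T then 1 / real K else 0)" if T: "T \<in> AA n m" for T
  proof -
    have "pmf (pmf_of_set (BB n m k T) \<bind> (\<lambda>p. return_pmf (T, p))) x
        = measure_pmf.expectation (pmf_of_set (BB n m k T)) (\<lambda>p. pmf (return_pmf (T, p)) x)"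
      by (rule pmf_bind)
    also have "\<dots> = (\<Sum>p\<in>BB n m k T. indicator {x} (T,p)) / real (card (BB n m k T))"
      using integral_pmf_of_set[OF BB_ne[OF T assms] finite_BB] by (simp add: pmf_return)
    also have "(\<Sum>p\<in>BB n m k T. indicator {x} (T,p) :: real) = (if T = T0 \<and> p0 \<in> BB n m k T then 1 else 0)"
      using finite_BB[of n m k T] by (auto simp: x indicator_def sum.delta)
    finally show ?thesis using K[OF T] by auto
  qed
  have "pmf (ACS_law n m k) x = measure_pmf.expectation (pmf_of_set (AA n m))
          (\<lambda>T. pmf (pmf_of_set (BB n m k T) \<bind> (\<lambda>p. return_pmf (T, p))) x)"
    unfolding ACS_law_def AA_def[symmetric] BB_def[symmetric] by (rule pmf_bind)
  also have "\<dots> = (\<Sum>T\<in>AA n m. pmf (pmf_of_set (BB n m k T) \<bind> (\<lambda>p. return_pmf (T, p))) x) / real (card (AA n m))"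
    using integral_pmf_of_set[OF AA_ne finite_AA] by simp
  also have "\<dots> = (\<Sum>T\<in>AA n m. (if T = T0 \<and> p0 \<in> BB n m k T then 1 / real K else 0)) / real (card (AA n m))"
    using inner by (simp cong: sum.cong)
  also have "\<dots> = (if T0 \<in> AA n m \<and> p0 \<in> BB n m k T0 then 1 / real K else 0) / real (card (AA n m))"
  proof -
    have "(\<Sum>T\<in>AA n m. (if T = T0 \<and> p0 \<in> BB n m k T then 1 / real K else 0))
        = (\<Sum>T\<in>AA n m. (if T0 = T then (if p0 \<in> BB n m k T0 then 1 / real K else 0) else 0))"
      by (rule sum.cong) auto
    also have "\<dots> = (if T0 \<in> AA n m \<and> p0 \<in> BB n m k T0 then 1 / real K else 0)"
      using finite_AA[of n m] by (simp add: sum.delta)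
    finally show ?thesis by simp
  qed
  also have "\<dots> = pmf (pmf_of_set (Sigma (AA n m) (BB n m k))) x"
    using fS neS cS by (simp add: x)
  finally show "pmf (ACS_law n m k) x = pmf (pmf_of_set (Sigma (AA n m) (BB n m k))) x" .
qed


lemma per_p:
  fixes d :: "nat \<Rightarrow> 'x datum"
  assumes kn: "k \<le> n" and m1: "m \<ge> 1"
    and p: "distinct p" "length p = k" "set p \<subseteq> {..<n+m}"
  shows "(\<Sum>T\<in>{T. T \<subseteq> {..<n+m} - set p \<and> card T = m}.
           (Mk n m d T p - real m / (real n - real k + 1)) * indicator S (Tsum n m d T p)) \<le> 0"
proof -
  define U where "U = {..<n+m} - set p"
  define C where "C = {i \<in> U. covered (d i)}"
  define c where "c = real m / (real n - real k + 1)"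
  define A' where "A' = {T. T \<subseteq> U \<and> card T = m}"
  have finU: "finite U" unfolding U_def by auto
  have CU: "C \<subseteq> U" unfolding C_def by auto
  have finC: "finite C" using finU CU finite_subset by blast
  have cardU: "card U = n + m - k" unfolding U_def using p
    by (subst card_Diff_subset) (auto simp: distinct_card)
  have eqs: "Pk n m T p \<inter> H0 n m d T = T \<inter> C" "Nminus n m d T p = C - T"
    if "T \<in> A'" for T
    using that unfolding A'_def Pk_def H0_def Nminus_def Uk_def C_def U_def by auto
  have ts: "Tsum n m d T p = card C" if "T \<in> A'" for T
  proof -
    have "card (C \<inter> T) + card (C - T) = card C"
      using card_Int_Diff[OF finC, of T] by simp
    then show ?thesis unfolding Tsum_def using eqs[OF that] by (simp add: Int_commute)
  qed
  have mk: "Mk n m d T p = real (card (T\<inter>C)) / (1 + real (card (C - T)))" if "T \<in> A'" for T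
    unfolding Mk_def using eqs[OF that] by simp
  have "(\<Sum>T\<in>A'. (Mk n m d T p - c) * indicator S (Tsum n m d T p))
      = indicator S (card C) * ((\<Sum>T\<in>A'. real (card (T\<inter>C)) / (1 + real (card (C - T)))) - c * real (card A'))"
    by (simp add: ts mk sum_subtractf sum_distrib_left algebra_simps cong: sum.cong)
  also have "\<dots> \<le> 0"
  proof -
    have mu: "1 \<le> m" "m \<le> card U" using m1 kn cardU by auto
    have "(\<Sum>T\<in>A'. real (card (T\<inter>C)) / (1 + real (card (C - T)))) \<le> real (card U choose (m-1))"
      unfolding A'_def by (rule core[OF finU CU m1])
    also have "\<dots> = c * real (card A')"
      unfolding choose_id[OF mu] A'_def n_subsets[OF finU] c_def using cardU kn
      by (simp add: of_nat_diff)
    finally show ?thesis by (simp add: indicator_def mult_le_0_iff)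
  qed
  finally show ?thesis unfolding A'_def U_def c_def .
qed

lemma comb:
  fixes d :: "nat \<Rightarrow> 'x datum"
  assumes kn: "k \<le> n" and m1: "m \<ge> 1"
  shows "measure_pmf.expectation (ACS_law n m k)
     (\<lambda>(T,p). (Mk n m d T p - real m / (real n - real k + 1)) * indicator S (Tsum n m d T p)) \<le> 0"
proof -
  define g where "g = (\<lambda>(T,p). (Mk n m d T p - real m / (real n - real k + 1)) * indicator S (Tsum n m d T p))"
  define LL where "LL = {xs. distinct xs \<and> length xs = k \<and> set xs \<subseteq> {..<n+m}}"
  define A' where "A' = (\<lambda>p. {T. T \<subseteq> {..<n+m} - set p \<and> card T = m})"
  have fS: "finite (Sigma (AA n m) (BB n m k))" using finite_AA finite_BB by auto
  have finLL: "finite LL"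
  proof -
    have "LL \<subseteq> {xs. set xs \<subseteq> {..<n+m} \<and> length xs = k}" unfolding LL_def by auto
    moreover have "finite {xs. set xs \<subseteq> {..<n+m} \<and> length xs = k}"
      by (rule finite_lists_length_eq) simp
    ultimately show ?thesis using finite_subset by blast
  qed
  have finA': "finite (A' p)" for p unfolding A'_def by auto
  have "(\<Sum>x\<in>Sigma (AA n m) (BB n m k). g x) = (\<Sum>x\<in>Sigma LL A'. g (snd x, fst x))"
    by (rule sum.reindex_bij_witness[where i="\<lambda>(p,T). (T,p)" and j="\<lambda>(T,p). (p,T)"])
       (auto simp: AA_def BB_def LL_def A'_def)
  also have "\<dots> = (\<Sum>p\<in>LL. \<Sum>T\<in>A' p. g (T, p))"
    using sum.Sigma[OF finLL, of A' "\<lambda>p T. g (T, p)"] finA' by (simp add: case_prod_beta)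
  also have "\<dots> \<le> 0"
  proof (rule sum_nonpos)
    fix p assume "p \<in> LL"
    then show "(\<Sum>T\<in>A' p. g (T, p)) \<le> 0"
      unfolding A'_def g_def LL_def using per_p[OF kn m1, of p d S] by simp
  qed
  finally have s: "(\<Sum>x\<in>Sigma (AA n m) (BB n m k). g x) \<le> 0" .
  have "measure_pmf.expectation (ACS_law n m k) g = (\<Sum>x\<in>Sigma (AA n m) (BB n m k). g x) / card (Sigma (AA n m) (BB n m k))"
    unfolding ACS_law_eq[OF kn] using fS by (intro integral_pmf_of_set) (use Sigma_ne[OF kn] in auto)
  also have "\<dots> \<le> 0" using s by (simp add: divide_nonpos_nonneg)
  finally show ?thesis unfolding g_def .
qed

definition dC :: "nat set \<Rightarrow> nat \<Rightarrow> 'x datum" where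
  "dC C i = (undefined, 0, if i \<in> C then UNIV else {})"

lemma covered_dC: "covered (dC C i) \<longleftrightarrow> i \<in> C"
  unfolding dC_def covered_def by auto

lemma Mk_cong:
  assumes "\<forall>i<n+m. covered (d i) = covered (d' i)"
  shows "Mk n m d T p = Mk n m d' T p" "Tsum n m d T p = Tsum n m d' T p"
proof -
  have "H0 n m d T = H0 n m d' T" using assms unfolding H0_def by auto
  moreover have "Nminus n m d T p = Nminus n m d' T p" using assms unfolding Nminus_def Uk_def by auto
  ultimately show "Mk n m d T p = Mk n m d' T p" "Tsum n m d T p = Tsum n m d' T p"
    unfolding Mk_def Tsum_def by simp_all
qed

lemma meas_fun:
  fixes M :: "'w measure" and S :: "'x datum measure" and D :: "'w \<Rightarrow> nat \<Rightarrow> 'x datum"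
    and \<Phi> :: "(nat \<Rightarrow> 'x datum) \<Rightarrow> 'y \<Rightarrow> 'b" and L :: "'y pmf"
  assumes cov: "{z. covered z} \<in> sets S"
    and Dm: "\<And>i. i < N \<Longrightarrow> (\<lambda>w. D w i) \<in> M \<rightarrow>\<^sub>M S"
    and \<Phi>: "\<And>d d' y. \<forall>i<N. covered (d i) = covered (d' i) \<Longrightarrow> \<Phi> d y = \<Phi> d' y"
    and sp: "space NN = UNIV" and Npos: "N > 0"
  shows "(\<lambda>\<omega>. \<Phi> (D (fst \<omega>)) (snd \<omega>)) \<in> M \<Otimes>\<^sub>M measure_pmf L \<rightarrow>\<^sub>M NN"
proof -
  define cv where "cv w = {i. i < N \<and> covered (D w i)}" for w
  have eq: "\<Phi> (D w) y = \<Phi> (dC (cv w)) y" for w y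
    by (rule \<Phi>) (auto simp: covered_dC cv_def)
  have pc: "{w \<in> space M. covered (D w i)} \<in> sets M" if "i < N" for i
  proof -
    have "{w \<in> space M. covered (D w i)} = (\<lambda>w. D w i) -` {z. covered z} \<inter> space M" by auto
    then show ?thesis using measurable_sets[OF Dm[OF that] cov] by simp
  qed
  have cvm: "cv \<in> M \<rightarrow>\<^sub>M count_space (Pow {..<N})"
    unfolding measurable_count_space_eq_countable[OF countable_finite[OF finite_Pow_iff[THEN iffD2, OF finite_lessThan]]]
  proof (intro conjI ballI)
    show "cv \<in> space M \<rightarrow> Pow {..<N}" unfolding cv_def by auto
    fix a assume a: "a \<in> Pow {..<N}"
    have pc': "{w \<in> space M. covered (D w i) = (i \<in> a)} \<in> sets M" if "i < N" for i
    proof (cases "i \<in> a")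
      case True then show ?thesis using pc[OF that] by simp
    next
      case False
      have "{w \<in> space M. covered (D w i) = (i \<in> a)} = space M - {w \<in> space M. covered (D w i)}"
        using False by auto
      then show ?thesis using pc[OF that] by auto
    qed
    have "cv -` {a} \<inter> space M = space M \<inter> (\<Inter>i\<in>{..<N}. {w \<in> space M. covered (D w i) = (i \<in> a)})"
    proof (intro set_eqI iffI)
      fix w assume "w \<in> cv -` {a} \<inter> space M"
      then show "w \<in> space M \<inter> (\<Inter>i\<in>{..<N}. {w \<in> space M. covered (D w i) = (i \<in> a)})"
        using a unfolding cv_def by auto
    next
      fix w assume w: "w \<in> space M \<inter> (\<Inter>i\<in>{..<N}. {w \<in> space M. covered (D w i) = (i \<in> a)})"
      have "cv w = a" using w a unfolding cv_def by auto
      then show "w \<in> cv -` {a} \<inter> space M" using w by auto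
    qed
    also have "\<dots> \<in> sets M"
      by (intro sets.Int sets.top sets.finite_INT) (use Npos in \<open>auto intro!: pc'\<close>)
    finally show "cv -` {a} \<inter> space M \<in> sets M" .
  qed
  have "(\<lambda>\<omega>. (\<lambda>C \<omega>. \<Phi> (dC C) (snd \<omega>)) (cv (fst \<omega>)) \<omega>) \<in> M \<Otimes>\<^sub>M measure_pmf L \<rightarrow>\<^sub>M NN"
  proof (rule measurable_compose_countable'[where I="Pow {..<N}"])
    fix C
    show "(\<lambda>\<omega>. \<Phi> (dC C) (snd \<omega>)) \<in> M \<Otimes>\<^sub>M measure_pmf L \<rightarrow>\<^sub>M NN"
      by (rule measurable_compose[OF measurable_snd]) (simp add: sp)
  next
    show "(\<lambda>\<omega>. cv (fst \<omega>)) \<in> M \<Otimes>\<^sub>M measure_pmf L \<rightarrow>\<^sub>M count_space (Pow {..<N})"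
      by (rule measurable_compose[OF measurable_fst cvm])
  qed (simp add: countable_finite)
  then show ?thesis using eq by simp
qed

theorem mainTheorem4:
  fixes M :: "'w measure" and S :: "'x datum measure"
    and D :: "'w \<Rightarrow> nat \<Rightarrow> 'x datum" and n m k :: nat
  assumes "prob_space M"
    and "n \<ge> 1" and "m \<ge> 1" and "k \<le> n"
    and "{z. covered z} \<in> sets S"
    and "\<And>i. i < n + m \<Longrightarrow> (\<lambda>w. D w i) \<in> M \<rightarrow>\<^sub>M S"
    and "exchangeable M S (n + m) D"
  defines "\<Omega> \<equiv> M \<Otimes>\<^sub>M measure_pmf (ACS_law n m k)"
  shows "(AE \<omega> in \<Omega>.
            real_cond_exp \<Omega>
              (vimage_algebra (space \<Omega>) (\<lambda>(w, T, p). Tsum n m (D w) T p) (count_space UNIV))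
              (\<lambda>(w, T, p). Mk n m (D w) T p) \<omega>
            \<le> real m / (real n - real k + 1))
       \<and> (\<integral>\<omega>. (\<lambda>(w, T, p). Mk n m (D w) T p) \<omega> \<partial>\<Omega>) \<le> real m / (real n - real k + 1)"
proof -
  note kn = assms(4) and m1 = assms(3) and cov = assms(5) and Dm = assms(6)
  define L where "L = ACS_law n m k"
  define c where "c = real m / (real n - real k + 1)"
  define f where "f = (\<lambda>(w::'w, T::nat set, p::nat list). Mk n m (D w) T p)"
  define t where "t = (\<lambda>(w::'w, T::nat set, p::nat list). Tsum n m (D w) T p)"
  define F where "F = vimage_algebra (space \<Omega>) t (count_space UNIV)"
  interpret P: prob_space M by (rule assms(1))
  interpret PP: pair_prob_space M "measure_pmf L"
    by (intro pair_prob_space.intro pair_sigma_finite.intro prob_space_imp_sigma_finite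
        assms(1) measure_pmf.prob_space_axioms)
  have Om: "\<Omega> = M \<Otimes>\<^sub>M measure_pmf L" unfolding \<Omega>_def L_def ..
  have Npos: "n + m > 0" using m1 by simp
  have fm: "f \<in> borel_measurable \<Omega>"
    using meas_fun[where \<Phi>="\<lambda>d y. Mk n m d (fst y) (snd y)" and NN=borel and L=L, OF cov Dm _ _ Npos]
    unfolding Om f_def by (simp add: Mk_cong case_prod_beta)
  have tm: "t \<in> \<Omega> \<rightarrow>\<^sub>M count_space UNIV"
    using meas_fun[where \<Phi>="\<lambda>d y. Tsum n m d (fst y) (snd y)" and NN="count_space UNIV" and L=L, OF cov Dm _ _ Npos]
    unfolding Om t_def by (simp add: Mk_cong case_prod_beta)
  have fb: "0 \<le> f \<omega> \<and> f \<omega> \<le> real (n + m)" for \<omega>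
  proof -
    obtain w T p where o: "\<omega> = (w, T, p)" by (cases \<omega>) auto
    have "Pk n m T p \<inter> H0 n m (D w) T \<subseteq> {..<n+m}" unfolding Pk_def Uk_def by auto
    then have "card (Pk n m T p \<inter> H0 n m (D w) T) \<le> n + m"
      using card_mono[of "{..<n+m}"] by fastforce
    then have a: "real (card (Pk n m T p \<inter> H0 n m (D w) T)) \<le> real (n+m)" by linarith
    have "f \<omega> \<le> real (card (Pk n m T p \<inter> H0 n m (D w) T))"
      unfolding o f_def Mk_def by (simp add: divide_le_eq algebra_simps)
    then show ?thesis using a unfolding o f_def Mk_def by simp
  qed
  have fi: "integrable \<Omega> f"
    unfolding Om by (rule PP.P.integrable_const_bound[where B="real (n+m)"]) (use fb fm[unfolded Om] in auto)
  have key: "(\<integral>\<omega>. (f \<omega> - c) * indicator A (t \<omega>) \<partial>\<Omega>) \<le> 0" for A :: "nat set"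
  proof -
    define h where "h = (\<lambda>\<omega>. (f \<omega> - c) * indicator A (t \<omega>))"
    have hm: "h \<in> borel_measurable \<Omega>" unfolding h_def using fm tm by measurable
    have hi: "integrable \<Omega> h"
      unfolding Om
    proof (rule PP.P.integrable_const_bound[where B="real (n+m) + \<bar>c\<bar>"])
      show "AE x in M \<Otimes>\<^sub>M measure_pmf L. norm (h x) \<le> real (n + m) + \<bar>c\<bar>"
      proof (rule AE_I2)
        fix x
        have "norm (h x) \<le> \<bar>f x - c\<bar>" unfolding h_def by (simp add: indicator_def abs_mult)
        also have "\<dots> \<le> real (n + m) + \<bar>c\<bar>" using fb[of x] by (simp add: abs_le_iff) arith
        finally show "norm (h x) \<le> real (n + m) + \<bar>c\<bar>" .
      qed
    qed (rule hm[unfolded Om])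
    have "(\<integral>w. (\<integral>y. h (w, y) \<partial>measure_pmf L) \<partial>M) = integral\<^sup>L \<Omega> h"
      unfolding Om by (rule PP.integral_fst') (use hi Om in simp)
    moreover have "(\<integral>w. (\<integral>y. h (w, y) \<partial>measure_pmf L) \<partial>M) \<le> 0"
    proof -
      have inner: "(\<integral>y. h (w, y) \<partial>measure_pmf L) \<le> 0" for w
      proof -
        have "(\<integral>y. h (w, y) \<partial>measure_pmf L) = measure_pmf.expectation (ACS_law n m k)
          (\<lambda>(T,p). (Mk n m (D w) T p - real m / (real n - real k + 1)) * indicator A (Tsum n m (D w) T p))"
          unfolding h_def f_def t_def L_def c_def by (simp add: case_prod_beta split_def)
        then show ?thesis using comb[OF kn m1, of "D w" A] by simp
      qed
      have "0 \<le> (\<integral>w. - (\<integral>y. h (w, y) \<partial>measure_pmf L) \<partial>M)"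
        by (rule integral_nonneg_AE, rule AE_I2) (use inner in \<open>auto simp: le_minus_iff\<close>)
      then show ?thesis by simp
    qed
    ultimately show ?thesis unfolding h_def by simp
  qed
  have part2: "(\<integral>\<omega>. f \<omega> \<partial>\<Omega>) \<le> c"
  proof -
    have "(\<integral>\<omega>. (f \<omega> - c) \<partial>\<Omega>) \<le> 0" using key[of UNIV] by simp
    moreover have "(\<integral>\<omega>. (f \<omega> - c) \<partial>\<Omega>) = (\<integral>\<omega>. f \<omega> \<partial>\<Omega>) - c"
      using fi unfolding Om by (simp add: PP.P.prob_space)
    ultimately show ?thesis by simp
  qed
  have sF: "sets F = {t -` A \<inter> space \<Omega> | A. A \<in> sets (count_space UNIV)}"
    unfolding F_def by (rule sets_vimage_algebra2) simp
  have subalg: "subalgebra \<Omega> F"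
    unfolding subalgebra_def
  proof
    show "space F = space \<Omega>" unfolding F_def by simp
    show "sets F \<subseteq> sets \<Omega>"
      unfolding sF using measurable_sets[OF tm] by auto
  qed
  have "finite_measure_subalgebra \<Omega> F"
    unfolding finite_measure_subalgebra_def finite_measure_subalgebra_axioms_def
    using PP.P.finite_measure_axioms subalg Om by simp
  then interpret FS: sigma_finite_subalgebra \<Omega> F
    by (rule finite_measure_subalgebra_is_sigma_finite)
  define g where "g = real_cond_exp \<Omega> F f"
  have gmF: "g \<in> borel_measurable F" unfolding g_def by (rule borel_measurable_cond_exp)
  have gm: "g \<in> borel_measurable \<Omega>" unfolding g_def by (rule borel_measurable_cond_exp2)
  have gi: "integrable \<Omega> g" unfolding g_def by (rule FS.real_cond_exp_int(1)[OF fi])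
  define B where "B = {\<omega> \<in> space F. c < g \<omega>}"
  have BF: "B \<in> sets F" unfolding B_def using gmF by measurable
  then obtain A where A: "B = t -` A \<inter> space \<Omega>" using sF by auto
  have BO: "B \<in> sets \<Omega>" using BF subalg unfolding subalgebra_def by auto
  have intA: "(\<integral>x. indicator B x * f x \<partial>\<Omega>) = (\<integral>x. indicator B x * g x \<partial>\<Omega>)"
    using FS.real_cond_exp_intA[OF fi BF] unfolding set_lebesgue_integral_def g_def by simp
  have iBf: "integrable \<Omega> (\<lambda>x. indicator B x * f x)"
    using integrable_mult_indicator[OF BO fi] by simp
  have iBg: "integrable \<Omega> (\<lambda>x. indicator B x * g x)"
    using integrable_mult_indicator[OF BO gi] by simp
  have iB: "integrable \<Omega> (\<lambda>x. c * indicator B x)"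
  proof (intro integrable_mult_right)
    show "integrable \<Omega> (indicator B :: _ \<Rightarrow> real)"
      using BO unfolding Om by (intro integrable_real_indicator) (auto simp: Om PP.P.emeasure_finite top.not_eq_extremum[symmetric])
  qed
  have "(\<integral>x. (f x - c) * indicator A (t x) \<partial>\<Omega>) = (\<integral>x. indicator B x * f x - c * indicator B x \<partial>\<Omega>)"
    by (rule Bochner_Integration.integral_cong) (auto simp: A indicator_def)
  also have "\<dots> = (\<integral>x. indicator B x * f x \<partial>\<Omega>) - (\<integral>x. c * indicator B x \<partial>\<Omega>)"
    by (rule Bochner_Integration.integral_diff[OF iBf iB])
  also have "\<dots> = (\<integral>x. indicator B x * g x \<partial>\<Omega>) - (\<integral>x. c * indicator B x \<partial>\<Omega>)"
    using intA by simp
  also have "\<dots> = (\<integral>x. indicator B x * (g x - c) \<partial>\<Omega>)"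
    by (subst Bochner_Integration.integral_diff[OF iBg iB, symmetric]) (simp add: algebra_simps)
  finally have le0: "(\<integral>x. indicator B x * (g x - c) \<partial>\<Omega>) \<le> 0" using key[of A] by simp
  have nn: "AE x in \<Omega>. 0 \<le> indicator B x * (g x - c)"
    by (rule AE_I2) (auto simp: B_def indicator_def)
  have iBgc: "integrable \<Omega> (\<lambda>x. indicator B x * (g x - c))"
    using Bochner_Integration.integrable_diff[OF iBg iB] by (simp add: algebra_simps)
  have "(\<integral>x. indicator B x * (g x - c) \<partial>\<Omega>) = 0"
    using le0 integral_nonneg_AE[OF nn] by linarith
  then have "AE x in \<Omega>. indicator B x * (g x - c) = 0"
    using integral_nonneg_eq_0_iff_AE[OF iBgc nn] by simp
  then have part1: "AE x in \<Omega>. g x \<le> c"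
  proof (rule AE_mp[OF _ AE_I2], intro impI)
    fix x assume x: "x \<in> space \<Omega>" and z: "indicator B x * (g x - c) = 0"
    show "g x \<le> c"
    proof (rule ccontr)
      assume "\<not> g x \<le> c"
      then have "x \<in> B" using x unfolding B_def F_def by simp
      then show False using z \<open>\<not> g x \<le> c\<close> by simp
    qed
  qed
  show ?thesis using part1 part2 unfolding g_def F_def t_def f_def c_def by simp
qed
end
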